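(* Let $C\subseteq\Lambda$ be any region. Let $W$ be any Hamiltonian that is relatively bounded by $H_0(C)$ with a constant $0\le b<1$, i.e. $\|W\psi\|\le b\|H_0(C)\psi\|$ for all $\psi\in\mathcal{H}$. Then for any operator $S$ on $\mathcal{H}$, \[ \|Q_C[S,W]P_C\|\le b\,\|Q_C[S,H_0(C)]P_C\|. \]
   Context: Let $\Lambda=\mathbb{Z}_L\times\mathbb{Z}_L$, each site carrying a finite-dimensional Hilbert space, $\mathcal{H}$ their tensor product, and $\mathcal{S}(2)$ the set of $2\times2$ squares of sites. $H_0=\sum_{A\in\mathcal{S}(2)}G_A$ with each $G_A$ acting on $A$, the $G_A$ pairwise commuting, $G_A\ge0$ and $G_A^2\ge G_A$. $P_A$ is the projector onto $\ker G_A$; for a region $C$, $P_C=\prod_{A\in\mathcal{S}(2),A\subseteq C}P_A$, $Q_C=I-P_C$, and $H_0(C)=\sum_{A\in\mathcal{S}(2),A\subseteq C}G_A$. *)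

theory Defs
  imports Complex_Main "HOL-Library.Product_Lexorder" "HOL-Library.Function_Algebras"
begin

text \<open>Lattice Lambda = Z_L x Z_L, sites represented as pairs (i,j) with i,j < L.
  Site x carries the Hilbert space C^(d x). The tensor product Hilbert space is
  represented by functions on configurations (basis labels); vectors and operators
  are complex functions on configurations, resp. pairs of configurations,
  vanishing outside the set of valid configurations.\<close>

type_synonym site = "nat \<times> nat"
type_synonym config = "site \<Rightarrow> nat"
type_synonym vect = "config \<Rightarrow> complex"
type_synonym oper = "config \<Rightarrow> config \<Rightarrow> complex"

definition sites :: "nat \<Rightarrow> site set" where
  "sites L = {0..<L} \<times> {0..<L}"

definition sq :: "nat \<Rightarrow> site \<Rightarrow> site set" where
  "sq L c = {((fst c + a) mod L, (snd c + b) mod L) | a b. a \<in> {0,1::nat} \<and> b \<in> {0,1::nat}}"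

definition squares :: "nat \<Rightarrow> site set set" where
  "squares L = sq L ` sites L"

definition configs :: "nat \<Rightarrow> (site \<Rightarrow> nat) \<Rightarrow> config set" where
  "configs L d = {\<sigma>. (\<forall>x\<in>sites L. \<sigma> x < d x) \<and> (\<forall>x. x \<notin> sites L \<longrightarrow> \<sigma> x = 0)}"

definition is_vec :: "nat \<Rightarrow> (site \<Rightarrow> nat) \<Rightarrow> vect \<Rightarrow> bool" where
  "is_vec L d \<psi> \<longleftrightarrow> (\<forall>\<sigma>. \<sigma> \<notin> configs L d \<longrightarrow> \<psi> \<sigma> = 0)"

definition is_op :: "nat \<Rightarrow> (site \<Rightarrow> nat) \<Rightarrow> oper \<Rightarrow> bool" where
  "is_op L d M \<longleftrightarrow> (\<forall>\<sigma> \<tau>. \<sigma> \<notin> configs L d \<or> \<tau> \<notin> configs L d \<longrightarrow> M \<sigma> \<tau> = 0)"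

definition app :: "nat \<Rightarrow> (site \<Rightarrow> nat) \<Rightarrow> oper \<Rightarrow> vect \<Rightarrow> vect" where
  "app L d M \<psi> = (\<lambda>\<sigma>. if \<sigma> \<in> configs L d then (\<Sum>\<tau>\<in>configs L d. M \<sigma> \<tau> * \<psi> \<tau>) else 0)"

definition opmult :: "nat \<Rightarrow> (site \<Rightarrow> nat) \<Rightarrow> oper \<Rightarrow> oper \<Rightarrow> oper" where
  "opmult L d M N = (\<lambda>\<sigma> \<tau>. if \<sigma> \<in> configs L d \<and> \<tau> \<in> configs L d
      then (\<Sum>\<rho>\<in>configs L d. M \<sigma> \<rho> * N \<rho> \<tau>) else 0)"

definition opid :: "nat \<Rightarrow> (site \<Rightarrow> nat) \<Rightarrow> oper" where
  "opid L d = (\<lambda>\<sigma> \<tau>. if \<sigma> \<in> configs L d \<and> \<sigma> = \<tau> then 1 else 0)"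

definition commutator :: "nat \<Rightarrow> (site \<Rightarrow> nat) \<Rightarrow> oper \<Rightarrow> oper \<Rightarrow> oper" where
  "commutator L d S W = opmult L d S W - opmult L d W S"

definition inner :: "nat \<Rightarrow> (site \<Rightarrow> nat) \<Rightarrow> vect \<Rightarrow> vect \<Rightarrow> complex" where
  "inner L d \<phi> \<psi> = (\<Sum>\<sigma>\<in>configs L d. cnj (\<phi> \<sigma>) * \<psi> \<sigma>)"

definition vnorm :: "nat \<Rightarrow> (site \<Rightarrow> nat) \<Rightarrow> vect \<Rightarrow> real" where
  "vnorm L d \<psi> = sqrt (\<Sum>\<sigma>\<in>configs L d. (cmod (\<psi> \<sigma>))\<^sup>2)"

definition opnorm :: "nat \<Rightarrow> (site \<Rightarrow> nat) \<Rightarrow> oper \<Rightarrow> real" where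
  "opnorm L d M = Sup {vnorm L d (app L d M \<psi>) | \<psi>. is_vec L d \<psi> \<and> vnorm L d \<psi> \<le> 1}"

definition hermitian :: "nat \<Rightarrow> (site \<Rightarrow> nat) \<Rightarrow> oper \<Rightarrow> bool" where
  "hermitian L d M \<longleftrightarrow> (\<forall>\<sigma> \<tau>. M \<sigma> \<tau> = cnj (M \<tau> \<sigma>))"

definition psd :: "nat \<Rightarrow> (site \<Rightarrow> nat) \<Rightarrow> oper \<Rightarrow> bool" where
  "psd L d M \<longleftrightarrow> hermitian L d M \<and>
     (\<forall>\<psi>. is_vec L d \<psi> \<longrightarrow> 0 \<le> Re (inner L d \<psi> (app L d M \<psi>)))"

definition restr :: "config \<Rightarrow> site set \<Rightarrow> config" where
  "restr \<sigma> A = (\<lambda>x. if x \<in> A then \<sigma> x else 0)"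

text \<open>M acts on region A: M = g \<otimes> identity on the complement of A.\<close>
definition acts_on :: "nat \<Rightarrow> (site \<Rightarrow> nat) \<Rightarrow> site set \<Rightarrow> oper \<Rightarrow> bool" where
  "acts_on L d A M \<longleftrightarrow> (\<exists>g. \<forall>\<sigma>\<in>configs L d. \<forall>\<tau>\<in>configs L d.
      M \<sigma> \<tau> = (if (\<forall>x\<in>sites L - A. \<sigma> x = \<tau> x) then g (restr \<sigma> A) (restr \<tau> A) else 0))"

definition kernel_projector :: "nat \<Rightarrow> (site \<Rightarrow> nat) \<Rightarrow> oper \<Rightarrow> oper \<Rightarrow> bool" where
  "kernel_projector L d G P \<longleftrightarrow> is_op L d P \<and> hermitian L d P \<and> opmult L d P P = P \<and>
     (\<forall>\<psi>. is_vec L d \<psi> \<longrightarrow> (app L d P \<psi> = \<psi> \<longleftrightarrow> app L d G \<psi> = (\<lambda>_. 0)))"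

text \<open>P_C = product of P_A over squares A contained in C (the P_A commute, so the
  order, here fixed via the sorted list of corners, is irrelevant).\<close>
definition region_proj :: "nat \<Rightarrow> (site \<Rightarrow> nat) \<Rightarrow> (site set \<Rightarrow> oper) \<Rightarrow> site set \<Rightarrow> oper" where
  "region_proj L d P C = foldr (opmult L d)
     (map P (remdups (map (sq L) (sorted_list_of_set {c \<in> sites L. sq L c \<subseteq> C})))) (opid L d)"

definition H0_region :: "nat \<Rightarrow> (site set \<Rightarrow> oper) \<Rightarrow> site set \<Rightarrow> oper" where
  "H0_region L G C = (\<Sum>A\<in>{A \<in> squares L. A \<subseteq> C}. G A)"

end

theory Submission
  imports Defs "HOL-Library.FuncSet"
begin

lemma sum_fun_apply': "(\<Sum>A\<in>F. f A) x = (\<Sum>A\<in>F. f A x)"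
  by (induction F rule: infinite_finite_induct) auto

lemma finite_configs: "finite (configs L d)"
proof -
  let ?f = "\<lambda>\<sigma>::config. restrict \<sigma> (sites L)"
  have "?f ` configs L d \<subseteq> PiE (sites L) (\<lambda>x. {..<d x})"
    by (auto simp: configs_def PiE_iff)
  moreover have "finite (sites L)" by (simp add: sites_def)
  ultimately have "finite (?f ` configs L d)" by (meson finite_PiE finite_lessThan finite_subset)
  moreover have "inj_on ?f (configs L d)"
    unfolding inj_on_def configs_def
    by (auto simp: fun_eq_iff restrict_def) (metis)
  ultimately show ?thesis using finite_imageD by blast
qed

lemma opmult_assoc: "opmult L d (opmult L d M N) R = opmult L d M (opmult L d N R)"
  unfolding opmult_def
  by (auto simp: fun_eq_iff sum_distrib_left sum_distrib_right mult.assoc intro: sum.swap)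

lemma app_opmult: "app L d (opmult L d M N) \<psi> = app L d M (app L d N \<psi>)"
  unfolding opmult_def app_def
  by (auto simp: fun_eq_iff sum_distrib_left sum_distrib_right mult.assoc intro: sum.swap)

lemma opmult_diff_left: "opmult L d (M - N) R = opmult L d M R - opmult L d N R"
  unfolding opmult_def by (auto simp: fun_eq_iff algebra_simps sum_subtractf)
lemma opmult_diff_right: "opmult L d R (M - N) = opmult L d R M - opmult L d R N"
  unfolding opmult_def by (auto simp: fun_eq_iff algebra_simps sum_subtractf)
lemma opmult_add_left: "opmult L d (M + N) R = opmult L d M R + opmult L d N R"
  unfolding opmult_def by (auto simp: fun_eq_iff algebra_simps sum.distrib)
lemma opmult_uminus_left: "opmult L d (- M) R = - opmult L d M R"
  unfolding opmult_def by (auto simp: fun_eq_iff sum_negf)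
lemma opmult_uminus_right: "opmult L d R (- M) = - opmult L d R M"
  unfolding opmult_def by (auto simp: fun_eq_iff sum_negf)
lemma opmult_zero_left: "opmult L d 0 R = 0"
  unfolding opmult_def by (auto simp: fun_eq_iff)
lemma opmult_zero_right: "opmult L d R 0 = 0"
  unfolding opmult_def by (auto simp: fun_eq_iff)

lemma opmult_sum_left: "finite F \<Longrightarrow> opmult L d (\<Sum>A\<in>F. G A) N = (\<Sum>A\<in>F. opmult L d (G A) N)"
proof (induction F rule: finite_induct)
  case empty thus ?case by (simp only: sum.empty opmult_zero_left)
next
  case (insert x F) thus ?case by (simp only: sum.insert[OF insert.hyps] opmult_add_left)
qed

lemma opmult_is_op: "is_op L d (opmult L d M N)"
  unfolding is_op_def opmult_def by auto

lemma opid_left: assumes "is_op L d Z" shows "opmult L d (opid L d) Z = Z"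
proof (rule ext, rule ext)
  fix \<sigma> \<tau>
  show "opmult L d (opid L d) Z \<sigma> \<tau> = Z \<sigma> \<tau>"
  proof (cases "\<sigma> \<in> configs L d \<and> \<tau> \<in> configs L d")
    case False thus ?thesis using assms by (auto simp: is_op_def opmult_def)
  next
    case True
    have "(\<Sum>\<rho>\<in>configs L d. opid L d \<sigma> \<rho> * Z \<rho> \<tau>) = (\<Sum>\<rho>\<in>configs L d. if \<sigma> = \<rho> then Z \<rho> \<tau> else 0)"
      using True by (intro sum.cong) (auto simp: opid_def)
    also have "\<dots> = Z \<sigma> \<tau>" using True by (simp add: finite_configs)
    finally show ?thesis using True by (simp add: opmult_def)
  qed
qed

definition adj :: "oper \<Rightarrow> oper" where "adj M = (\<lambda>\<sigma> \<tau>. cnj (M \<tau> \<sigma>))"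

lemma adj_opmult: "adj (opmult L d M N) = opmult L d (adj N) (adj M)"
  unfolding adj_def opmult_def by (auto simp: fun_eq_iff mult.commute)

lemma herm_adj: "hermitian L d M \<Longrightarrow> adj M = M"
  unfolding adj_def hermitian_def by (intro ext) metis

lemma adj_zero: "adj 0 = 0" unfolding adj_def by (auto simp: fun_eq_iff)

lemma op_ext:
  assumes "is_op L d M" "\<And>\<psi>. is_vec L d \<psi> \<Longrightarrow> app L d M \<psi> = (\<lambda>_. 0)"
  shows "M = 0"
proof (rule ext, rule ext)
  fix \<sigma> \<tau>
  show "M \<sigma> \<tau> = 0 \<sigma> \<tau>"
  proof (cases "\<sigma> \<in> configs L d \<and> \<tau> \<in> configs L d")
    case False thus ?thesis using assms(1) by (auto simp: is_op_def)
  next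
    case True
    let ?\<psi> = "\<lambda>\<rho>. if \<rho> = \<tau> then 1 else (0::complex)"
    have "is_vec L d ?\<psi>" using True by (auto simp: is_vec_def)
    hence "app L d M ?\<psi> \<sigma> = 0" using assms(2) by simp
    moreover have "app L d M ?\<psi> \<sigma> = M \<sigma> \<tau>" using True
      by (simp add: app_def if_distrib sum.delta[OF finite_configs] cong: if_cong)
    ultimately show ?thesis by simp
  qed
qed


lemma opid_right: assumes "is_op L d Z" shows "opmult L d Z (opid L d) = Z"
proof (rule ext, rule ext)
  fix \<sigma> \<tau>
  show "opmult L d Z (opid L d) \<sigma> \<tau> = Z \<sigma> \<tau>"
  proof (cases "\<sigma> \<in> configs L d \<and> \<tau> \<in> configs L d")
    case False thus ?thesis using assms by (auto simp: is_op_def opmult_def)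
  next
    case True
    have "(\<Sum>\<rho>\<in>configs L d. Z \<sigma> \<rho> * opid L d \<rho> \<tau>) = (\<Sum>\<rho>\<in>configs L d. if \<rho> = \<tau> then Z \<sigma> \<rho> else 0)"
      using True by (intro sum.cong) (auto simp: opid_def)
    also have "\<dots> = Z \<sigma> \<tau>" using True by (simp add: finite_configs)
    finally show ?thesis using True by (simp add: opmult_def)
  qed
qed

lemma opid_is_op: "is_op L d (opid L d)" by (auto simp: is_op_def opid_def)
lemma opid_herm: "hermitian L d (opid L d)" by (auto simp: hermitian_def opid_def)

lemma herm_iff: "hermitian L d M \<longleftrightarrow> adj M = M"
proof
  assume "adj M = M"
  hence "\<And>\<sigma> \<tau>. M \<sigma> \<tau> = cnj (M \<tau> \<sigma>)" unfolding adj_def by metis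
  thus "hermitian L d M" unfolding hermitian_def by blast
qed (rule herm_adj)

lemma app_is_vec: "is_vec L d (app L d M \<psi>)" by (simp add: is_vec_def app_def)

lemma app_zero: "app L d 0 \<psi> = (\<lambda>_. 0)" by (simp add: app_def fun_eq_iff)

lemma app_diff: "app L d (M - N) \<psi> = (\<lambda>\<sigma>. app L d M \<psi> \<sigma> - app L d N \<psi> \<sigma>)"
  by (simp add: app_def fun_eq_iff sum_subtractf algebra_simps)

lemma app_uminus: "app L d (- M) \<psi> = (\<lambda>\<sigma>. - app L d M \<psi> \<sigma>)"
  by (simp add: app_def fun_eq_iff sum_negf)

lemma is_op_diff: "is_op L d M \<Longrightarrow> is_op L d N \<Longrightarrow> is_op L d (M - N)"
  by (auto simp: is_op_def)

lemma comm_lemma: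
  assumes kp: "kernel_projector L d GA PA" and hM: "hermitian L d M"
    and z: "opmult L d GA (opmult L d M PA) = 0"
  shows "opmult L d PA M = opmult L d M PA"
proof -
  have hP: "hermitian L d PA" and PP: "opmult L d PA PA = PA" using kp by (auto simp: kernel_projector_def)
  have "opmult L d PA (opmult L d M PA) - opmult L d M PA = 0"
  proof (rule op_ext)
    show "is_op L d (opmult L d PA (opmult L d M PA) - opmult L d M PA)"
      by (intro is_op_diff opmult_is_op)
  next
    fix \<psi> assume "is_vec L d \<psi>"
    let ?\<phi> = "app L d (opmult L d M PA) \<psi>"
    have "app L d GA ?\<phi> = (\<lambda>_. 0)" using z by (metis app_opmult app_zero)
    hence "app L d PA ?\<phi> = ?\<phi>" using kp app_is_vec unfolding kernel_projector_def by blast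
    thus "app L d (opmult L d PA (opmult L d M PA) - opmult L d M PA) \<psi> = (\<lambda>_. 0)"
      by (simp add: app_diff app_opmult)
  qed
  hence e: "opmult L d PA (opmult L d M PA) = opmult L d M PA" by simp
  have "adj (opmult L d PA (opmult L d M PA)) = opmult L d (opmult L d PA M) PA"
    using hP hM by (simp add: adj_opmult herm_adj)
  moreover have "adj (opmult L d M PA) = opmult L d PA M"
    using hP hM by (simp add: adj_opmult herm_adj)
  ultimately have "opmult L d (opmult L d PA M) PA = opmult L d PA M" using e by simp
  thus ?thesis using e by (simp add: opmult_assoc)
qed

lemma GP_zero:
  assumes kp: "kernel_projector L d GA PA"
  shows "opmult L d GA PA = 0"
proof (rule op_ext[OF opmult_is_op])
  fix \<psi> assume "is_vec L d \<psi>"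
  have PP: "opmult L d PA PA = PA" using kp by (auto simp: kernel_projector_def)
  have "app L d PA (app L d PA \<psi>) = app L d PA \<psi>" using PP by (metis app_opmult)
  hence "app L d GA (app L d PA \<psi>) = (\<lambda>_. 0)" using kp app_is_vec unfolding kernel_projector_def by blast
  thus "app L d (opmult L d GA PA) \<psi> = (\<lambda>_. 0)" by (simp add: app_opmult)
qed

locale commfam =
  fixes L :: nat and d :: "site \<Rightarrow> nat" and F :: "oper set"
  assumes comm: "\<And>a b. a \<in> F \<Longrightarrow> b \<in> F \<Longrightarrow> opmult L d a b = opmult L d b a"
    and opF: "\<And>a. a \<in> F \<Longrightarrow> is_op L d a \<and> hermitian L d a"
begin

lemma foldr_is_op: "is_op L d (foldr (opmult L d) xs (opid L d))"
  by (cases xs) (auto simp: opid_is_op opmult_is_op)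

lemma commute_foldr:
  assumes "is_op L d y" "\<forall>x\<in>set xs. opmult L d y x = opmult L d x y"
  shows "opmult L d y (foldr (opmult L d) xs (opid L d)) = opmult L d (foldr (opmult L d) xs (opid L d)) y"
  using assms(2)
proof (induction xs)
  case Nil thus ?case using assms(1) by (simp add: opid_left opid_right)
next
  case (Cons x xs)
  let ?R = "foldr (opmult L d) xs (opid L d)"
  have "opmult L d y (opmult L d x ?R) = opmult L d (opmult L d x y) ?R"
    using Cons.prems by (simp add: opmult_assoc[symmetric])
  also have "\<dots> = opmult L d x (opmult L d ?R y)" using Cons by (simp add: opmult_assoc)
  finally show ?case by (simp add: opmult_assoc)
qed

lemma foldr_herm: "set xs \<subseteq> F \<Longrightarrow> hermitian L d (foldr (opmult L d) xs (opid L d))"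
proof (induction xs)
  case Nil thus ?case by (simp add: opid_herm)
next
  case (Cons x xs)
  let ?R = "foldr (opmult L d) xs (opid L d)"
  have hx: "hermitian L d x" "is_op L d x" using Cons.prems opF by auto
  have hR: "hermitian L d ?R" using Cons by simp
  have "adj (opmult L d x ?R) = opmult L d ?R x" using hx hR by (simp add: adj_opmult herm_adj)
  also have "\<dots> = opmult L d x ?R"
    using commute_foldr[of x xs] hx Cons.prems comm by (metis insert_subset list.simps(15) subset_iff)
  finally show ?case by (simp add: herm_iff)
qed

lemma foldr_extract:
  "set xs \<subseteq> F \<Longrightarrow> y \<in> set xs \<Longrightarrow>
   foldr (opmult L d) xs (opid L d) = opmult L d y (foldr (opmult L d) (remove1 y xs) (opid L d))"
proof (induction xs)
  case Nil thus ?case by simp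
next
  case (Cons x xs)
  show ?case
  proof (cases "x = y")
    case True thus ?thesis by simp
  next
    case False
    let ?R = "foldr (opmult L d) (remove1 y xs) (opid L d)"
    have "y \<in> set xs" using Cons.prems False by auto
    hence "foldr (opmult L d) xs (opid L d) = opmult L d y ?R" using Cons by auto
    hence "foldr (opmult L d) (x#xs) (opid L d) = opmult L d (opmult L d x y) ?R"
      by (simp add: opmult_assoc)
    also have "\<dots> = opmult L d (opmult L d y x) ?R"
      using comm Cons.prems \<open>y \<in> set xs\<close> by auto
    finally show ?thesis using False by (simp add: opmult_assoc)
  qed
qed

end

lemma vnorm_uminus: "vnorm L d (\<lambda>\<sigma>. - v \<sigma>) = vnorm L d v"
  by (simp add: vnorm_def)

lemma vnorm_zero_imp:
  assumes "vnorm L d v \<le> 0" "\<sigma> \<in> configs L d" shows "v \<sigma> = 0"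
proof -
  have "(\<Sum>\<sigma>\<in>configs L d. (cmod (v \<sigma>))\<^sup>2) \<le> 0"
    using assms(1) unfolding vnorm_def by (metis real_sqrt_le_0_iff)
  hence "(\<Sum>\<sigma>\<in>configs L d. (cmod (v \<sigma>))\<^sup>2) = 0" by (meson order_antisym sum_nonneg zero_le_power2)
  hence "\<forall>\<sigma>\<in>configs L d. (cmod (v \<sigma>))\<^sup>2 = 0"
    by (subst (asm) sum_nonneg_eq_0_iff) (auto simp: finite_configs)
  thus ?thesis using assms(2) by simp
qed

lemma comp_le_vnorm: "\<sigma> \<in> configs L d \<Longrightarrow> cmod (v \<sigma>) \<le> vnorm L d v"
proof -
  assume a: "\<sigma> \<in> configs L d"
  have "(cmod (v \<sigma>))\<^sup>2 \<le> (\<Sum>\<sigma>\<in>configs L d. (cmod (v \<sigma>))\<^sup>2)"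
    using a by (intro member_le_sum) (auto simp: finite_configs)
  thus ?thesis unfolding vnorm_def by (metis norm_ge_zero real_le_rsqrt)
qed

lemma app_bounded: "\<exists>B. \<forall>\<psi>. vnorm L d \<psi> \<le> 1 \<longrightarrow> vnorm L d (app L d M \<psi>) \<le> B"
proof (intro exI allI impI)
  fix \<psi> assume h: "vnorm L d \<psi> \<le> 1"
  have "\<And>\<sigma>. \<sigma> \<in> configs L d \<Longrightarrow> cmod (app L d M \<psi> \<sigma>) \<le> (\<Sum>\<tau>\<in>configs L d. cmod (M \<sigma> \<tau>))"
  proof -
    fix \<sigma> assume s: "\<sigma> \<in> configs L d"
    have "cmod (app L d M \<psi> \<sigma>) \<le> (\<Sum>\<tau>\<in>configs L d. cmod (M \<sigma> \<tau> * \<psi> \<tau>))"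
      using s by (simp add: app_def norm_sum)
    also have "\<dots> \<le> (\<Sum>\<tau>\<in>configs L d. cmod (M \<sigma> \<tau>))"
    proof (rule sum_mono)
      fix \<tau> assume t: "\<tau> \<in> configs L d"
      have "cmod (\<psi> \<tau>) \<le> 1" using comp_le_vnorm[OF t, of \<psi>] h by simp
      thus "cmod (M \<sigma> \<tau> * \<psi> \<tau>) \<le> cmod (M \<sigma> \<tau>)"
        by (simp add: norm_mult mult_left_le)
    qed
    finally show "cmod (app L d M \<psi> \<sigma>) \<le> (\<Sum>\<tau>\<in>configs L d. cmod (M \<sigma> \<tau>))" .
  qed
  hence "(\<Sum>\<sigma>\<in>configs L d. (cmod (app L d M \<psi> \<sigma>))\<^sup>2) \<le> (\<Sum>\<sigma>\<in>configs L d. (\<Sum>\<tau>\<in>configs L d. cmod (M \<sigma> \<tau>))\<^sup>2)"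
    by (intro sum_mono power_mono) auto
  thus "vnorm L d (app L d M \<psi>) \<le> sqrt (\<Sum>\<sigma>\<in>configs L d. (\<Sum>\<tau>\<in>configs L d. cmod (M \<sigma> \<tau>))\<^sup>2)"
    unfolding vnorm_def by simp
qed


lemma is_op_add: "is_op L d M \<Longrightarrow> is_op L d N \<Longrightarrow> is_op L d (M + N)"
  by (auto simp: is_op_def)
lemma herm_add: "hermitian L d M \<Longrightarrow> hermitian L d N \<Longrightarrow> hermitian L d (M + N)"
  by (simp add: herm_iff adj_def fun_eq_iff)

lemma sum_is_op_herm: "finite F \<Longrightarrow> (\<forall>A\<in>F. is_op L d (G A) \<and> hermitian L d (G A)) \<Longrightarrow>
   is_op L d (\<Sum>A\<in>F. G A) \<and> hermitian L d (\<Sum>A\<in>F. G A)"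
proof (induction F rule: finite_induct)
  case empty thus ?case by (simp add: is_op_def herm_iff adj_def fun_eq_iff)
next
  case (insert x F) thus ?case
    by (simp only: sum.insert[OF insert.hyps]) (meson insert_iff is_op_add herm_add)
qed

lemma key_form:
  assumes V: "is_op L d V" and VP: "opmult L d V P = 0" and PV: "opmult L d P V = 0"
  shows "opmult L d (opmult L d (opid L d - P) (commutator L d S V)) P = - opmult L d V (opmult L d S P)"
proof -
  have c: "opmult L d (commutator L d S V) P = - opmult L d V (opmult L d S P)"
    unfolding commutator_def
    by (simp add: opmult_diff_left opmult_assoc VP opmult_zero_right)
  have "opmult L d (opmult L d (opid L d - P) (commutator L d S V)) P
     = opmult L d (opid L d - P) (- opmult L d V (opmult L d S P))"
    by (simp add: opmult_assoc c)
  also have "\<dots> = - (opmult L d V (opmult L d S P) - opmult L d (opmult L d P V) (opmult L d S P))"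
    by (simp add: opmult_uminus_right opmult_diff_left opid_left opmult_is_op opmult_assoc)
  also have "\<dots> = - opmult L d V (opmult L d S P)" by (simp add: PV opmult_zero_left)
  finally show ?thesis .
qed

theorem lemma4:
  fixes L :: nat and d :: "site \<Rightarrow> nat"
    and G P :: "site set \<Rightarrow> oper"
    and C :: "site set" and W S :: oper and b :: real
  assumes L_pos: "0 < L"
    and d_pos: "\<forall>x\<in>sites L. 0 < d x"
    and G_op: "\<forall>A\<in>squares L. is_op L d (G A) \<and> acts_on L d A (G A)"
    and G_comm: "\<forall>A\<in>squares L. \<forall>B\<in>squares L. opmult L d (G A) (G B) = opmult L d (G B) (G A)"
    and G_pos: "\<forall>A\<in>squares L. psd L d (G A)"
    and G_sq: "\<forall>A\<in>squares L. psd L d (opmult L d (G A) (G A) - G A)"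
    and P_def: "\<forall>A\<in>squares L. kernel_projector L d (G A) (P A)"
    and C_sub: "C \<subseteq> sites L"
    and W_op: "is_op L d W" and W_herm: "hermitian L d W"
    and b_ge: "0 \<le> b" and b_lt: "b < 1"
    and W_bound: "\<forall>\<psi>. is_vec L d \<psi> \<longrightarrow>
        vnorm L d (app L d W \<psi>) \<le> b * vnorm L d (app L d (H0_region L G C) \<psi>)"
    and S_op: "is_op L d S"
  shows "opnorm L d (opmult L d (opmult L d (opid L d - region_proj L d P C) (commutator L d S W))
                       (region_proj L d P C))
         \<le> b * opnorm L d (opmult L d (opmult L d (opid L d - region_proj L d P C)
                       (commutator L d S (H0_region L G C))) (region_proj L d P C))"
proof -
  define PC where "PC = region_proj L d P C"
  define H where "H = H0_region L G C"
  have Gh: "\<And>A. A \<in> squares L \<Longrightarrow> hermitian L d (G A) \<and> is_op L d (G A)"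
    using G_pos G_op by (auto simp: psd_def)
  have Ph: "\<And>A. A \<in> squares L \<Longrightarrow> hermitian L d (P A) \<and> is_op L d (P A)"
    using P_def by (auto simp: kernel_projector_def)
  have GP0: "\<And>A. A \<in> squares L \<Longrightarrow> opmult L d (G A) (P A) = 0"
    using P_def GP_zero by blast
  have PG: "\<And>A B. A \<in> squares L \<Longrightarrow> B \<in> squares L \<Longrightarrow> opmult L d (P A) (G B) = opmult L d (G B) (P A)"
  proof -
    fix A B assume A: "A \<in> squares L" and B: "B \<in> squares L"
    have "opmult L d (G A) (opmult L d (G B) (P A)) = opmult L d (G B) (opmult L d (G A) (P A))"
      using G_comm A B by (metis opmult_assoc)
    hence "opmult L d (G A) (opmult L d (G B) (P A)) = 0" using GP0[OF A] by (simp add: opmult_zero_right)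
    thus "opmult L d (P A) (G B) = opmult L d (G B) (P A)"
      using comm_lemma P_def A Gh[OF B] by blast
  qed
  have PP: "\<And>A B. A \<in> squares L \<Longrightarrow> B \<in> squares L \<Longrightarrow> opmult L d (P A) (P B) = opmult L d (P B) (P A)"
  proof -
    fix A B assume A: "A \<in> squares L" and B: "B \<in> squares L"
    have "opmult L d (G A) (opmult L d (P B) (P A)) = opmult L d (P B) (opmult L d (G A) (P A))"
      using PG[OF B A] by (metis opmult_assoc)
    hence "opmult L d (G A) (opmult L d (P B) (P A)) = 0" using GP0[OF A] by (simp add: opmult_zero_right)
    thus "opmult L d (P A) (P B) = opmult L d (P B) (P A)"
      using comm_lemma P_def A Ph[OF B] by blast
  qed
  interpret cf: commfam L d "P ` squares L"
    by unfold_locales (use PP Ph in auto)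
  define xs where "xs = map P (remdups (map (sq L) (sorted_list_of_set {c \<in> sites L. sq L c \<subseteq> C})))"
  have PC_xs: "PC = foldr (opmult L d) xs (opid L d)"
    unfolding PC_def xs_def region_proj_def by simp
  have fin_sites: "finite (sites L)" by (simp add: sites_def)
  have xs_sub: "set xs \<subseteq> P ` squares L"
    unfolding xs_def squares_def using fin_sites by auto
  have xs_mem: "\<And>A. A \<in> squares L \<Longrightarrow> A \<subseteq> C \<Longrightarrow> P A \<in> set xs"
    unfolding xs_def squares_def using fin_sites by auto
  have PC_op: "is_op L d PC" using PC_xs cf.foldr_is_op by simp
  have PC_herm: "hermitian L d PC" using PC_xs cf.foldr_herm xs_sub by simp
  have finH: "finite {A \<in> squares L. A \<subseteq> C}"
    unfolding squares_def using fin_sites by simp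
  have H_oh: "is_op L d H \<and> hermitian L d H"
    unfolding H_def H0_region_def by (rule sum_is_op_herm[OF finH]) (use Gh in auto)
  have HP: "opmult L d H PC = 0"
  proof -
    have "opmult L d H PC = (\<Sum>A\<in>{A \<in> squares L. A \<subseteq> C}. opmult L d (G A) PC)"
      unfolding H_def H0_region_def by (rule opmult_sum_left[OF finH])
    also have "\<dots> = (\<Sum>A\<in>{A \<in> squares L. A \<subseteq> C}. 0)"
    proof (rule sum.cong[OF refl])
      fix A assume "A \<in> {A \<in> squares L. A \<subseteq> C}"
      hence A: "A \<in> squares L" "A \<subseteq> C" by auto
      have "PC = opmult L d (P A) (foldr (opmult L d) (remove1 (P A) xs) (opid L d))"
        using PC_xs cf.foldr_extract xs_sub xs_mem[OF A] by simp
      thus "opmult L d (G A) PC = 0"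
        using GP0[OF A(1)] by (simp add: opmult_assoc[symmetric] opmult_zero_left)
    qed
    finally show ?thesis by simp
  qed
  have PH: "opmult L d PC H = 0"
    using arg_cong[OF HP, of adj] herm_adj[of L d H] H_oh PC_herm by (simp add: adj_opmult herm_adj adj_zero)
  have WP: "opmult L d W PC = 0"
  proof (rule op_ext[OF opmult_is_op])
    fix \<psi> assume "is_vec L d \<psi>"
    let ?\<phi> = "app L d PC \<psi>"
    have "app L d H ?\<phi> = (\<lambda>_. 0)" using HP by (metis app_opmult app_zero)
    moreover have "vnorm L d (app L d W ?\<phi>) \<le> b * vnorm L d (app L d H ?\<phi>)"
      using W_bound app_is_vec[of L d PC \<psi>] unfolding H_def by blast
    ultimately have "vnorm L d (app L d W ?\<phi>) \<le> 0" by (simp add: vnorm_def)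
    hence "\<And>\<sigma>. app L d W ?\<phi> \<sigma> = 0"
      using vnorm_zero_imp by (metis app_def)
    thus "app L d (opmult L d W PC) \<psi> = (\<lambda>_. 0)" by (simp add: app_opmult fun_eq_iff)
  qed
  have PW: "opmult L d PC W = 0"
    using arg_cong[OF WP, of adj] W_herm PC_herm by (simp add: adj_opmult herm_adj adj_zero)
  define X where "X = opmult L d (opmult L d (opid L d - PC) (commutator L d S W)) PC"
  define Y where "Y = opmult L d (opmult L d (opid L d - PC) (commutator L d S H)) PC"
  have X_eq: "X = - opmult L d W (opmult L d S PC)"
    unfolding X_def by (rule key_form[OF W_op WP PW])
  have Y_eq: "Y = - opmult L d H (opmult L d S PC)"
    unfolding Y_def by (rule key_form[OF _ HP PH]) (use H_oh in simp)
  define SY where "SY = {vnorm L d (app L d Y \<psi>) | \<psi>. is_vec L d \<psi> \<and> vnorm L d \<psi> \<le> 1}"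
  define SX where "SX = {vnorm L d (app L d X \<psi>) | \<psi>. is_vec L d \<psi> \<and> vnorm L d \<psi> \<le> 1}"
  have bdd: "bdd_above SY"
  proof -
    obtain B where "\<forall>\<psi>. vnorm L d \<psi> \<le> 1 \<longrightarrow> vnorm L d (app L d Y \<psi>) \<le> B"
      using app_bounded by blast
    thus ?thesis unfolding SY_def bdd_above_def by blast
  qed
  have ne: "SX \<noteq> {}"
  proof -
    have "is_vec L d (\<lambda>_. 0)" by (simp add: is_vec_def)
    moreover have "vnorm L d (\<lambda>_. 0) \<le> 1" by (simp add: vnorm_def)
    ultimately show ?thesis unfolding SX_def by blast
  qed
  have "Sup SX \<le> b * Sup SY"
  proof (rule cSup_least[OF ne])
    fix x assume "x \<in> SX"
    then obtain \<psi> where x: "x = vnorm L d (app L d X \<psi>)" and \<psi>: "is_vec L d \<psi>" "vnorm L d \<psi> \<le> 1"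
      unfolding SX_def by blast
    let ?\<phi> = "app L d (opmult L d S PC) \<psi>"
    have "x = vnorm L d (app L d W ?\<phi>)"
      unfolding x X_eq by (simp add: app_uminus vnorm_uminus app_opmult)
    also have "\<dots> \<le> b * vnorm L d (app L d H ?\<phi>)"
      using W_bound app_is_vec unfolding H_def by blast
    also have "vnorm L d (app L d H ?\<phi>) = vnorm L d (app L d Y \<psi>)"
      unfolding Y_eq by (simp add: app_uminus vnorm_uminus app_opmult)
    also have "vnorm L d (app L d Y \<psi>) \<le> Sup SY"
      by (rule cSup_upper[OF _ bdd]) (use \<psi> in \<open>auto simp: SY_def\<close>)
    finally show "x \<le> b * Sup SY" using b_ge by (simp add: mult_left_mono)
  qed
  thus ?thesis unfolding opnorm_def SX_def SY_def X_def Y_def PC_def H_def .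
qed

end
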